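(* Let $\Gamma$ be a subset of $M_{n\times n}(\mathbb{C})$ such that for any $A,B\in\Gamma$ there exists a polynomial $p(x)=\sum_{i=0}^{k}A_i x^i$ with matrix coefficients $A_i\in M_{n\times n}(\mathbb{C})$, considered on $[0,1]$, such that $p(0)=A$, $p(1)=B$ and $p([0,1])\subset\Gamma$. Let $\Gamma_s$ be the set of all matrices in $\Gamma$ that are nonsingular and have $n$ distinct eigenvalues. Then $\Gamma_s$ is dense in $\Gamma$ if and only if the closure $\overline{\Gamma}$ contains a nonsingular matrix with $n$ distinct eigenvalues.
   Context: $M_{n\times n}(\mathbb{C})$ denotes the set of $n\times n$ complex matrices, equipped with the topology induced by the Frobenius norm. *)

theory Defs
  imports "HOL-Analysis.Analysis"
begin

text \<open>n x n complex matrices are represented as complex^'n^'n; the norm on this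
type is the Euclidean norm of all entries, i.e. the Frobenius norm.\<close>

definition mat_eigenvalues :: "complex^'n^'n \<Rightarrow> complex set" where
  "mat_eigenvalues A = {c. \<exists>v. v \<noteq> 0 \<and> A *v v = c *s v}"

definition has_n_distinct_eigenvalues :: "complex^'n^'n \<Rightarrow> bool" where
  "has_n_distinct_eigenvalues A \<longleftrightarrow> card (mat_eigenvalues A) = CARD('n)"

definition matpoly :: "(nat \<Rightarrow> complex^'n^'n) \<Rightarrow> nat \<Rightarrow> real \<Rightarrow> complex^'n^'n" where
  "matpoly C k t = (\<Sum>i\<le>k. (t ^ i) *\<^sub>R C i)"

end

theory Submission
  imports Defs "HOL-Computational_Algebra.Fundamental_Theorem_Algebra"
begin

inductive PF :: "('a \<Rightarrow> complex) set \<Rightarrow> ('a \<Rightarrow> complex) \<Rightarrow> bool" for B where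
  PF_base: "b \<in> B \<Longrightarrow> PF B b"
| PF_const: "PF B (\<lambda>x. c)"
| PF_add: "PF B f \<Longrightarrow> PF B g \<Longrightarrow> PF B (\<lambda>x. f x + g x)"
| PF_mult: "PF B f \<Longrightarrow> PF B g \<Longrightarrow> PF B (\<lambda>x. f x * g x)"

lemma PF_sum: "finite S \<Longrightarrow> (\<And>i. i \<in> S \<Longrightarrow> PF B (f i)) \<Longrightarrow> PF B (\<lambda>x. \<Sum>i\<in>S. f i x)"
  by (induction S rule: finite_induct) (auto intro: PF.intros)

lemma PF_prod: "finite S \<Longrightarrow> (\<And>i. i \<in> S \<Longrightarrow> PF B (f i)) \<Longrightarrow> PF B (\<lambda>x. \<Prod>i\<in>S. f i x)"
  by (induction S rule: finite_induct) (auto intro: PF.intros)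

lemma PF_det:
  fixes F :: "'a \<Rightarrow> complex^'n^'n"
  assumes "\<And>i j. PF B (\<lambda>x. F x $ i $ j)"
  shows "PF B (\<lambda>x. det (F x))"
  unfolding det_def
  by (intro PF_sum PF_mult PF_const PF_prod assms) auto

lemma PF_cont:
  fixes B :: "('a::topological_space \<Rightarrow> complex) set"
  assumes "PF B f" "\<And>b. b \<in> B \<Longrightarrow> continuous_on UNIV b"
  shows "continuous_on UNIV f"
  using assms by induction (auto intro: continuous_intros)

lemma PF_comp:
  assumes "PF B1 f" "\<And>b. b \<in> B1 \<Longrightarrow> PF B2 (\<lambda>y. b (g y))"
  shows "PF B2 (\<lambda>y. f (g y))"
  using assms by induction (auto intro: PF.intros)

lemma PF_real_poly:
  assumes "PF {\<lambda>t::real. complex_of_real t} f"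
  shows "\<exists>q. \<forall>t. f t = poly q (complex_of_real t)"
  using assms
proof induction
  case (PF_base b) then show ?case by (intro exI[of _ "[:0,1:]"]) auto
next
  case (PF_const c) then show ?case by (intro exI[of _ "[:c:]"]) auto
next
  case (PF_add f g)
  then obtain p q where "\<forall>t. f t = poly p (complex_of_real t)" "\<forall>t. g t = poly q (complex_of_real t)" by blast
  then show ?case by (intro exI[of _ "p+q"]) auto
next
  case (PF_mult f g)
  then obtain p q where "\<forall>t. f t = poly p (complex_of_real t)" "\<forall>t. g t = poly q (complex_of_real t)" by blast
  then show ?case by (intro exI[of _ "p*q"]) auto
qed

definition PPF :: "('a \<Rightarrow> complex) set \<Rightarrow> ('a \<Rightarrow> complex poly) \<Rightarrow> bool" where
  "PPF B P \<longleftrightarrow> (\<forall>k. PF B (\<lambda>x. coeff (P x) k))"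

lemma PPF_const: "PPF B (\<lambda>x. p)"
  unfolding PPF_def by (auto intro: PF.intros)

lemma PPF_add: "PPF B P \<Longrightarrow> PPF B Q \<Longrightarrow> PPF B (\<lambda>x. P x + Q x)"
  unfolding PPF_def by (auto intro: PF.intros)

lemma PPF_mult: "PPF B P \<Longrightarrow> PPF B Q \<Longrightarrow> PPF B (\<lambda>x. P x * Q x)"
  unfolding PPF_def coeff_mult by (auto intro!: PF_sum PF_mult)

lemma PPF_sum: "finite S \<Longrightarrow> (\<And>i. i \<in> S \<Longrightarrow> PPF B (f i)) \<Longrightarrow> PPF B (\<lambda>x. \<Sum>i\<in>S. f i x)"
  by (induction S rule: finite_induct) (auto intro: PPF_add PPF_const)

lemma PPF_prod: "finite S \<Longrightarrow> (\<And>i. i \<in> S \<Longrightarrow> PPF B (f i)) \<Longrightarrow> PPF B (\<lambda>x. \<Prod>i\<in>S. f i x)"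
  by (induction S rule: finite_induct) (auto intro: PPF_mult PPF_const)

lemma PPF_pCons: "PF B f \<Longrightarrow> PPF B P \<Longrightarrow> PPF B (\<lambda>x. pCons (f x) (P x))"
  unfolding PPF_def
proof
  fix k assume "PF B f" "\<forall>k. PF B (\<lambda>x. coeff (P x) k)"
  then show "PF B (\<lambda>x. coeff (pCons (f x) (P x)) k)"
    by (cases k) auto
qed

lemma PPF_pderiv: "PPF B P \<Longrightarrow> PPF B (\<lambda>x. pderiv (P x))"
  unfolding PPF_def coeff_pderiv by (auto intro: PF.intros)

lemma PPF_det:
  fixes F :: "'a \<Rightarrow> complex poly^'n^'n"
  assumes "\<And>i j. PPF B (\<lambda>x. F x $ i $ j)"
  shows "PPF B (\<lambda>x. det (F x))"
  unfolding det_def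
  by (intro PPF_sum PPF_mult PPF_const PPF_prod assms) auto


definition smat :: "complex \<Rightarrow> complex^'n^'n \<Rightarrow> complex^'n^'n" where
  "smat c M = (\<chi> i j. c * M$i$j)"

fun mpow :: "complex^'n^'n \<Rightarrow> nat \<Rightarrow> complex^'n^'n" where
  "mpow A 0 = mat 1"
| "mpow A (Suc k) = A ** mpow A k"

definition mev :: "complex poly \<Rightarrow> complex^'n^'n \<Rightarrow> complex^'n^'n" where
  "mev q A = (\<Sum>k\<le>degree q. smat (coeff q k) (mpow A k))"

lemma smat_0[simp]: "smat 0 M = 0"
  by (simp add: smat_def vec_eq_iff)

lemma smat_add: "smat a M + smat b M = smat (a+b) M"
  by (simp add: smat_def vec_eq_iff algebra_simps)

lemma smat_sum: "finite S \<Longrightarrow> smat a (sum f S) = (\<Sum>k\<in>S. smat a (f k))"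
  by (induction S rule: finite_induct) (auto simp: smat_def vec_eq_iff algebra_simps)

lemma smat_smat: "smat a (smat b M) = smat (a*b) M"
  by (simp add: smat_def vec_eq_iff algebra_simps)

lemma matrix_mul_smat: "A ** smat c M = smat c (A ** M)"
  by (simp add: smat_def vec_eq_iff matrix_matrix_mult_def sum_distrib_left algebra_simps)

lemma smat_matrix_mul: "smat c M ** A = smat c (M ** A)"
  by (simp add: smat_def vec_eq_iff matrix_matrix_mult_def sum_distrib_left algebra_simps)

lemma matrix_add_rdistrib: "((B + C) ** (A::complex^'n^'n)) = (B ** A) + (C ** A)"
  by (simp add: matrix_matrix_mult_def vec_eq_iff sum.distrib[symmetric] algebra_simps)

lemma matrix_mul_sum: "finite S \<Longrightarrow> (A::complex^'n^'n) ** sum f S = (\<Sum>k\<in>S. A ** f k)"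
  by (induction S rule: finite_induct) (auto simp: matrix_add_ldistrib)

lemma sum_matrix_mul: "finite S \<Longrightarrow> sum f S ** (A::complex^'n^'n) = (\<Sum>k\<in>S. f k ** A)"
  by (induction S rule: finite_induct) (auto simp: matrix_add_rdistrib)

lemma mev_bound:
  assumes "degree q \<le> N"
  shows "mev q A = (\<Sum>k\<le>N. smat (coeff q k) (mpow A k))"
proof -
  have "(\<Sum>k\<le>N. smat (coeff q k) (mpow A k)) = (\<Sum>k\<le>degree q. smat (coeff q k) (mpow A k))"
    using assms by (intro sum.mono_neutral_right) (auto simp: coeff_eq_0)
  then show ?thesis by (simp add: mev_def)
qed

lemma mev_0[simp]: "mev 0 A = 0"
  by (simp add: mev_def)

lemma mev_add: "mev (p + q) A = mev p A + mev q A"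
proof -
  let ?N = "max (degree p) (degree q)"
  have "degree (p+q) \<le> ?N" by (rule degree_add_le) auto
  then show ?thesis
    by (simp add: mev_bound[of _ ?N] sum.distrib[symmetric] smat_add coeff_add)
qed

lemma mev_smult: "mev (smult a q) A = smat a (mev q A)"
  by (simp add: mev_bound[of "smult a q" "degree q"] mev_def smat_sum smat_smat)

lemma mev_pCons: "mev (pCons a p) A = smat a (mat 1) + A ** mev p A"
proof -
  have "mev (pCons a p) A = (\<Sum>k\<le>Suc (degree p). smat (coeff (pCons a p) k) (mpow A k))"
    by (rule mev_bound) simp
  also have "\<dots> = smat a (mat 1) + (\<Sum>k\<le>degree p. smat (coeff p k) (mpow A (Suc k)))"
    by (subst sum.atMost_Suc_shift) simp
  also have "(\<Sum>k\<le>degree p. smat (coeff p k) (mpow A (Suc k))) = A ** mev p A"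
    by (simp add: mev_def matrix_mul_sum matrix_mul_smat)
  finally show ?thesis .
qed

lemma smat_one: "smat a (mat 1) ** M = smat a M"
  by (simp add: smat_matrix_mul)

lemma smat_distrib: "smat a (M + N) = smat a M + smat a N"
  by (simp add: smat_def vec_eq_iff algebra_simps)

lemma mev_mult: "mev (p * q) A = mev p A ** mev q A"
proof (induction p)
  case 0
  then show ?case by simp
next
  case (pCons a p)
  have "mev (pCons a p * q) A = mev (smult a q) A + mev (pCons 0 (p * q)) A"
    by (simp add: mev_add)
  also have "\<dots> = smat a (mev q A) + A ** (mev p A ** mev q A)"
    by (simp add: mev_smult mev_pCons pCons.IH)
  also have "\<dots> = (smat a (mat 1) + A ** mev p A) ** mev q A"
    by (simp add: matrix_add_rdistrib smat_one matrix_mul_assoc)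
  finally show ?case by (simp add: mev_pCons)
qed

lemma smat_mulv: "smat a M *v v = a *s (M *v v)"
  by (simp add: smat_def vec_eq_iff matrix_vector_mult_def sum_distrib_left algebra_simps)

lemma mulv_smult: "(M::complex^'n^'n) *v (c *s v) = c *s (M *v v)"
  by (simp add: vec_eq_iff matrix_vector_mult_def sum_distrib_left algebra_simps)

lemma mev_eigen:
  assumes "A *v v = c *s v"
  shows "mev q A *v v = poly q c *s v"
proof (induction q)
  case 0
  then show ?case by (simp add: vec_eq_iff)
next
  case (pCons a p)
  have "mev (pCons a p) A *v v = a *s v + A *v (mev p A *v v)"
    by (simp add: mev_pCons matrix_vector_mult_add_rdistrib smat_mulv matrix_vector_mul_assoc)
  also have "\<dots> = (a + c * poly p c) *s v"
    using assms by (simp add: pCons.IH mulv_smult vec_eq_iff algebra_simps)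
  finally show ?case by simp
qed

lemma det_zero_kernel:
  fixes M :: "complex^'n^'n"
  shows "det M = 0 \<longleftrightarrow> (\<exists>v. v \<noteq> 0 \<and> M *v v = 0)"
proof -
  have "det M \<noteq> 0 \<longleftrightarrow> (\<forall>x. M *v x = 0 \<longrightarrow> x = 0)"
    using invertible_det_nz[of M] invertible_left_inverse[of M] matrix_left_invertible_ker[of M]
    by simp
  then show ?thesis by blast
qed

lemma mat_c_mulv: "(mat c - A) *v v = c *s v - (A::complex^'n^'n) *v v"
proof -
  have "mat c *v v = c *s v"
    proof -
    have "(\<Sum>j\<in>UNIV. (if i = j then c else 0) * v $ j) = c * v $ i" for i
      by (simp add: if_distrib[of "\<lambda>x. x * v $ _"] cong: if_cong)
    then show ?thesis by (simp add: vec_eq_iff matrix_vector_mult_def mat_def)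
  qed
  then show ?thesis by (simp add: matrix_vector_mult_diff_rdistrib)
qed
lemma eigen_det: "c \<in> mat_eigenvalues (A::complex^'n^'n) \<longleftrightarrow> det (mat c - A) = 0"
proof -
  have "(c *s v - A *v v = 0) \<longleftrightarrow> (A *v v = c *s v)" for v by (metis eq_iff_diff_eq_0)
  then show ?thesis unfolding det_zero_kernel mat_c_mulv mat_eigenvalues_def by simp
qed

definition charmat :: "complex^'n^'n \<Rightarrow> complex poly^'n^'n" where
  "charmat A = (\<chi> i j. [:- A$i$j, of_bool (i=j):])"

definition charpoly :: "complex^'n^'n \<Rightarrow> complex poly" where
  "charpoly A = det (charmat A)"

lemma poly_charmat: "poly (charmat A $ i $ j) c = (mat c - A) $ i $ j"
  by (simp add: charmat_def mat_def)

lemma poly_charpoly: "poly (charpoly A) c = det (mat c - A)"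
  unfolding charpoly_def det_def poly_sum poly_mult poly_of_int poly_prod poly_charmat ..

lemma eigen_charpoly: "mat_eigenvalues A = {c. poly (charpoly A) c = 0}"
  by (simp add: set_eq_iff eigen_det poly_charpoly)

lemma charpoly_term_degree:
  assumes "p permutes (UNIV::'n set)"
  shows "degree (\<Prod>i\<in>UNIV. charmat (A::complex^'n^'n) $ i $ p i) \<le> CARD('n)"
    and "p \<noteq> id \<Longrightarrow> degree (\<Prod>i\<in>UNIV. charmat (A::complex^'n^'n) $ i $ p i) < CARD('n)"
proof -
  have le1: "degree (charmat A $ i $ j) \<le> 1" for i j
    by (simp add: charmat_def)
  have "degree (\<Prod>i\<in>UNIV. charmat A $ i $ p i) \<le> (\<Sum>i\<in>UNIV. degree (charmat A $ i $ p i))"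
    using degree_prod_sum_le[of UNIV "\<lambda>i. charmat A $ i $ p i"] by (simp add: o_def)
  also have "\<dots> \<le> (\<Sum>i\<in>(UNIV::'n set). 1)"
    by (intro sum_mono le1)
  finally show "degree (\<Prod>i\<in>UNIV. charmat (A::complex^'n^'n) $ i $ p i) \<le> CARD('n)" by simp
  assume "p \<noteq> id"
  then obtain i0 where "p i0 \<noteq> i0" by (auto simp: fun_eq_iff)
  then have "degree (charmat A $ i0 $ p i0) < 1" by (simp add: charmat_def)
  then have "(\<Sum>i\<in>UNIV. degree (charmat A $ i $ p i)) < (\<Sum>i\<in>(UNIV::'n set). 1)"
    by (intro sum_strict_mono_ex1) (auto intro: le1[unfolded One_nat_def])
  then show "degree (\<Prod>i\<in>UNIV. charmat (A::complex^'n^'n) $ i $ p i) < CARD('n)"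
    using degree_prod_sum_le[of UNIV "\<lambda>i. charmat A $ i $ p i"] by (simp add: o_def)
qed

lemma charpoly_degree: "degree (charpoly (A::complex^'n^'n)) = CARD('n)"
  and charpoly_coeff_n: "coeff (charpoly (A::complex^'n^'n)) CARD('n) = 1"
proof -
  let ?P = "{p. p permutes (UNIV::'n set)}"
  let ?t = "\<lambda>p. of_int (sign p) * (\<Prod>i\<in>UNIV. charmat A $ i $ p i) :: complex poly"
  have dt: "degree (?t p) \<le> CARD('n)" if "p \<in> ?P" for p
    using degree_mult_le[of "of_int (sign p)" "\<Prod>i\<in>UNIV. charmat A $ i $ p i"]
      charpoly_term_degree(1)[of p A] that by simp
  have dle: "degree (charpoly A) \<le> CARD('n)"
    unfolding charpoly_def det_def by (intro degree_sum_le) (auto intro: dt)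
  have c0: "coeff (?t p) CARD('n) = 0" if "p \<in> ?P - {id}" for p
  proof -
    have "degree (?t p) < CARD('n)"
      using degree_mult_le[of "of_int (sign p)" "\<Prod>i\<in>UNIV. charmat A $ i $ p i"]
        charpoly_term_degree(2)[of p A] that by simp
    then show ?thesis by (simp add: coeff_eq_0)
  qed
  have cid: "coeff (?t id) CARD('n) = 1"
  proof -
    have nz: "charmat A $ i $ id i \<noteq> 0" for i by (simp add: charmat_def)
    have deg: "degree (\<Prod>i\<in>UNIV. charmat A $ i $ id i) = CARD('n)"
      by (subst degree_prod_sum_eq) (auto simp: nz charmat_def)
    have "lead_coeff (\<Prod>i\<in>UNIV. charmat A $ i $ id i) = 1"
      by (subst lead_coeff_prod) (simp add: charmat_def)
    then show ?thesis using deg by (simp add: sign_id)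
  qed
  have e1: "coeff (charpoly A) CARD('n) = (\<Sum>p\<in>?P. coeff (?t p) CARD('n))"
    unfolding charpoly_def det_def coeff_sum ..
  have e2: "(\<Sum>p\<in>?P. coeff (?t p) CARD('n)) = coeff (?t id) CARD('n)"
    by (rule sum.remove[where x=id, THEN trans]) (auto simp: permutes_id c0)
  show c1: "coeff (charpoly A) CARD('n) = 1" using e1 e2 cid by simp
  then show "degree (charpoly (A::complex^'n^'n)) = CARD('n)"
    using le_degree[of "charpoly A" "CARD('n)"] dle by simp
qed


lemma card_roots_rsquarefree:
  fixes p :: "complex poly"
  assumes p: "p \<noteq> 0"
  shows "card {c. poly p c = 0} = degree p \<longleftrightarrow> rsquarefree p"
proof -
  let ?R = "{c. poly p c = 0}"
  have fin: "finite ?R" using poly_roots_finite[OF p] .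
  have sz: "degree p = (\<Sum>x\<in>?R. order x p)"
    using size_proots_complex[of p] size_multiset_overloaded_eq[of "proots p"] p by simp
  have ge1: "order x p \<ge> 1" if "x \<in> ?R" for x
    using that p order_root[of p x] by auto
  show ?thesis
  proof
    assume c: "card ?R = degree p"
    show "rsquarefree p" unfolding rsquarefree_def
    proof (intro conjI p allI)
      fix a
      show "order a p = 0 \<or> order a p = 1"
      proof (rule ccontr)
        assume "\<not> (order a p = 0 \<or> order a p = 1)"
        then have a: "a \<in> ?R" "order a p > 1" using order_root[of p a] by auto
        have "(\<Sum>x\<in>?R. (1::nat)) < (\<Sum>x\<in>?R. order x p)"
          using a fin ge1 by (intro sum_strict_mono_ex1) auto
        then show False using c sz by simp
      qed
    qed
  next
    assume r: "rsquarefree p"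
    have "(\<Sum>x\<in>?R. order x p) = (\<Sum>x\<in>?R. (1::nat))"
      using rsquarefree_root_order[OF r _ p] by simp
    then show "card ?R = degree p" using sz by simp
  qed
qed

lemma matrix_mul_zero_r[simp]: "(A::complex^'n^'n) ** 0 = 0"
  by (simp add: matrix_matrix_mult_def vec_eq_iff)

lemma mev_const: "mev [:a:] A = smat a (mat 1)"
  using mev_pCons[of a 0 A] by simp

lemma mev_lin: "mev [:-m, 1:] A *v v = A *v v - m *s v"
proof -
  have "mev [:-m, 1:] A = smat (-m) (mat 1) + A ** smat 1 (mat 1)"
    using mev_pCons[of "-m" "[:1:]" A] mev_const[of 1 A] by simp
  then have "mev [:-m, 1:] A *v v = (-m) *s (mat 1 *v v) + A *v (smat 1 (mat 1) *v v)"
    by (simp add: matrix_vector_mult_add_rdistrib smat_mulv matrix_vector_mul_assoc[symmetric])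
  then show ?thesis by (simp add: smat_mulv vec_eq_iff)
qed

lemma mev_det_nz:
  fixes A :: "complex^'n^'n"
  shows "q \<noteq> 0 \<Longrightarrow> (\<forall>c\<in>mat_eigenvalues A. poly q c \<noteq> 0) \<Longrightarrow> det (mev q A) \<noteq> 0"
proof (induction "degree q" arbitrary: q rule: less_induct)
  case less
  show ?case
  proof (cases "degree q = 0")
    case True
    then obtain a where q: "q = [:a:]" using degree_eq_zeroE by blast
    with less.prems have a: "a \<noteq> 0" by simp
    have "smat a (mat 1) *v v = 0 \<Longrightarrow> v = 0" for v :: "complex^'n"
      using a by (simp add: smat_mulv vec_eq_iff)
    then show ?thesis unfolding q mev_const det_zero_kernel by blast
  next
    case False
    then obtain m where "poly q m = 0" using alg_closed_imp_poly_has_root by blast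
    then obtain r where q: "q = [:-m,1:] * r" by (auto simp: poly_eq_0_iff_dvd elim: dvdE)
    with less.prems have r: "r \<noteq> 0" by auto
    have dq: "degree q = Suc (degree r)"
      unfolding q using r by (subst degree_mult_eq) auto
    have hr: "\<forall>c\<in>mat_eigenvalues A. poly r c \<noteq> 0"
      using less.prems(2) unfolding q by auto
    have d1: "det (mev r A) \<noteq> 0"
      using less.hyps[of r] dq r hr by simp
    have mnot: "m \<notin> mat_eigenvalues A"
      using less.prems(2) unfolding q by auto
    have "mev [:-m,1:] A *v v = 0 \<Longrightarrow> v = 0" for v
    proof (rule ccontr)
      assume "mev [:-m,1:] A *v v = 0" "v \<noteq> 0"
      then have "A *v v = m *s v" by (simp add: mev_lin)
      then show False using mnot \<open>v \<noteq> 0\<close> unfolding mat_eigenvalues_def by blast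
    qed
    then have d2: "det (mev [:-m,1:] A) \<noteq> 0" unfolding det_zero_kernel by blast
    show ?thesis unfolding q mev_mult det_mul using d1 d2 by simp
  qed
qed

lemma mev_det:
  fixes A :: "complex^'n^'n"
  assumes "q \<noteq> 0"
  shows "det (mev q A) \<noteq> 0 \<longleftrightarrow> (\<forall>c\<in>mat_eigenvalues A. poly q c \<noteq> 0)"
proof
  assume d: "det (mev q A) \<noteq> 0"
  show "\<forall>c\<in>mat_eigenvalues A. poly q c \<noteq> 0"
  proof (intro ballI notI)
    fix c assume "c \<in> mat_eigenvalues A" "poly q c = 0"
    then obtain v where v: "v \<noteq> 0" "A *v v = c *s v" unfolding mat_eigenvalues_def by blast
    then have "mev q A *v v = 0" using mev_eigen[OF v(2), of q] \<open>poly q c = 0\<close> by (simp add: vec_eq_iff)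
    then show False using d v unfolding det_zero_kernel by blast
  qed
qed (use mev_det_nz assms in blast)

definition Dfun :: "complex^'n^'n \<Rightarrow> complex" where
  "Dfun A = det A * det (\<Sum>k\<le>CARD('n). smat (coeff (pderiv (charpoly A)) k) (mpow A k))"

lemma good_iff:
  fixes A :: "complex^'n^'n"
  shows "(invertible A \<and> has_n_distinct_eigenvalues A) \<longleftrightarrow> Dfun A \<noteq> 0"
proof -
  let ?p = "charpoly A"
  have dp: "degree ?p = CARD('n)" by (rule charpoly_degree)
  have np: "?p \<noteq> 0" using charpoly_coeff_n[of A] by auto
  have npd: "pderiv ?p \<noteq> 0" using dp by (simp add: pderiv_eq_0_iff)
  have s: "(\<Sum>k\<le>CARD('n). smat (coeff (pderiv ?p) k) (mpow A k)) = mev (pderiv ?p) A"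
    by (rule mev_bound[symmetric]) (simp add: degree_pderiv dp)
  have "has_n_distinct_eigenvalues A \<longleftrightarrow> rsquarefree ?p"
    unfolding has_n_distinct_eigenvalues_def eigen_charpoly
    using card_roots_rsquarefree[OF np] dp by simp
  also have "\<dots> \<longleftrightarrow> det (mev (pderiv ?p) A) \<noteq> 0"
    unfolding rsquarefree_roots mev_det[OF npd] eigen_charpoly by auto
  finally show ?thesis
    unfolding Dfun_def s invertible_det_nz by simp
qed


lemma PF_pow: "PF B f \<Longrightarrow> PF B (\<lambda>x. f x ^ l)"
  by (induction l) (auto intro: PF_mult PF_const)

definition PM :: "('a \<Rightarrow> complex) set \<Rightarrow> ('a \<Rightarrow> complex^'n^'n) \<Rightarrow> bool" where
  "PM B F \<longleftrightarrow> (\<forall>i j. PF B (\<lambda>x. F x $ i $ j))"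

lemma PM_const: "PM B (\<lambda>x. M)"
  by (simp add: PM_def PF_const)

lemma PM_add: "PM B F \<Longrightarrow> PM B G \<Longrightarrow> PM B (\<lambda>x. F x + G x)"
  by (simp add: PM_def PF_add)

lemma PM_mult: "PM B F \<Longrightarrow> PM B G \<Longrightarrow> PM B (\<lambda>x. F x ** G x)"
  unfolding PM_def matrix_matrix_mult_def by (auto intro!: PF_sum PF_mult)

lemma PM_smat: "PF B c \<Longrightarrow> PM B F \<Longrightarrow> PM B (\<lambda>x. smat (c x) (F x))"
  unfolding PM_def smat_def by (auto intro!: PF_mult)

lemma PM_sum: "finite S \<Longrightarrow> (\<And>i. i \<in> S \<Longrightarrow> PM B (f i)) \<Longrightarrow> PM B (\<lambda>x. \<Sum>i\<in>S. f i x)"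
  by (induction S rule: finite_induct) (auto intro: PM_add PM_const)

lemma PM_mpow: "PM B F \<Longrightarrow> PM B (\<lambda>x. mpow (F x) k)"
  by (induction k) (auto intro: PM_mult PM_const)

definition EB :: "(complex^'n^'n \<Rightarrow> complex) set" where
  "EB = {(\<lambda>A. A $ i $ j) | i j. True}"

lemma PM_id: "PM EB (\<lambda>A. A)"
  unfolding PM_def EB_def by (auto intro!: PF_base)

lemma PF_Dfun: "PF EB (Dfun :: complex^'n^'n \<Rightarrow> complex)"
proof -
  have cm: "PPF EB (\<lambda>A::complex^'n^'n. charmat A $ i $ j)" for i j
  proof -
    have "PF EB (\<lambda>A::complex^'n^'n. - A $ i $ j)"
      using PF_mult[OF PF_const[of EB "-1"] PM_id[unfolded PM_def, rule_format, of i j]] by simp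
    then show ?thesis unfolding charmat_def by (simp add: PPF_pCons PPF_const)
  qed
  have cp: "PPF EB (\<lambda>A::complex^'n^'n. pderiv (charpoly A))"
    unfolding charpoly_def by (intro PPF_pderiv PPF_det cm)
  have "PM EB (\<lambda>A::complex^'n^'n. \<Sum>k\<le>CARD('n). smat (coeff (pderiv (charpoly A)) k) (mpow A k))"
    using cp unfolding PPF_def by (intro PM_sum PM_smat PM_mpow PM_id) auto
  then have "PF EB (\<lambda>A::complex^'n^'n. det (\<Sum>k\<le>CARD('n). smat (coeff (pderiv (charpoly A)) k) (mpow A k)))"
    unfolding PM_def by (intro PF_det) auto
  moreover have "PF EB (\<lambda>A::complex^'n^'n. det A)"
    using PM_id unfolding PM_def by (intro PF_det) auto
  ultimately show ?thesis unfolding Dfun_def by (intro PF_mult)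
qed

lemma cont_Dfun: "continuous_on UNIV (Dfun :: complex^'n^'n \<Rightarrow> complex)"
  by (rule PF_cont[OF PF_Dfun]) (auto simp: EB_def intro!: continuous_intros)

lemma matpoly_entry: "matpoly C k t $ i $ j = (\<Sum>l\<le>k. complex_of_real t ^ l * C l $ i $ j)"
proof -
  have "matpoly C k t $ i $ j = (\<Sum>l\<le>k. (t ^ l) *\<^sub>R (C l $ i $ j))"
    by (simp add: matpoly_def)
  also have "\<dots> = (\<Sum>l\<le>k. complex_of_real t ^ l * C l $ i $ j)"
    by (simp add: scaleR_conv_of_real)
  finally show ?thesis .
qed

lemma PF_matpoly:
  fixes C :: "nat \<Rightarrow> complex^'n^'n"
  shows "PF {\<lambda>t::real. complex_of_real t} (\<lambda>t. Dfun (matpoly C k t))"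
proof (rule PF_comp[OF PF_Dfun])
  fix b :: "complex^'n^'n \<Rightarrow> complex" assume "b \<in> EB"
  then obtain i j where b: "b = (\<lambda>A. A $ i $ j)" by (auto simp: EB_def)
  show "PF {\<lambda>t::real. complex_of_real t} (\<lambda>t. b (matpoly C k t))"
    unfolding b matpoly_entry
    by (intro PF_sum PF_mult PF_const PF_pow[of _ "\<lambda>t. complex_of_real t"] PF_base) auto
qed


theorem theorem3p7:
  fixes \<Gamma> :: "(complex^'n^'n) set"
  assumes nonempty: "\<Gamma> \<noteq> {}"
    and polyconn: "\<forall>A\<in>\<Gamma>. \<forall>B\<in>\<Gamma>. \<exists>(C :: nat \<Rightarrow> complex^'n^'n) k.
              matpoly C k 0 = A \<and> matpoly C k 1 = B \<and> (\<forall>t\<in>{0..1}. matpoly C k t \<in> \<Gamma>)"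
  shows "\<Gamma> \<subseteq> closure {A \<in> \<Gamma>. invertible A \<and> has_n_distinct_eigenvalues A}
         \<longleftrightarrow> (\<exists>M\<in>closure \<Gamma>. invertible M \<and> has_n_distinct_eigenvalues M)"
proof
  let ?G = "{A \<in> \<Gamma>. invertible A \<and> has_n_distinct_eigenvalues A}"
  assume sub: "\<Gamma> \<subseteq> closure ?G"
  obtain A where A: "A \<in> \<Gamma>" using nonempty by (meson ex_in_conv)
  from sub A have "A \<in> closure ?G" by (rule subsetD)
  then have "?G \<noteq> {}" by (metis closure_empty empty_iff)
  then obtain M where M: "M \<in> ?G" by (meson ex_in_conv)
  then have M1: "M \<in> closure \<Gamma>" using closure_subset[of \<Gamma>] by (simp add: subset_iff)
  from M have "invertible M \<and> has_n_distinct_eigenvalues M" by simp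
  with M1 show "\<exists>M\<in>closure \<Gamma>. invertible M \<and> has_n_distinct_eigenvalues M" by (intro bexI)
next
  let ?G = "{A \<in> \<Gamma>. invertible A \<and> has_n_distinct_eigenvalues A}"
  assume "\<exists>M\<in>closure \<Gamma>. invertible M \<and> has_n_distinct_eigenvalues M"
  then obtain M where M: "M \<in> closure \<Gamma>" "Dfun M \<noteq> 0" using good_iff by (meson bexE)
  have opn: "open (Dfun -` (-{0}))"
    by (rule open_vimage) (auto intro: cont_Dfun)
  have "M \<in> Dfun -` (-{0})" using M(2) by simp
  then have "\<Gamma> \<inter> (Dfun -` (-{0})) \<noteq> {}"
    using closure_iff_nhds_not_empty[of M \<Gamma>, THEN iffD1, OF M(1), rule_format, OF order_refl opn \<open>M \<in> Dfun -` (-{0})\<close>] by simp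
  then obtain A0 where A0: "A0 \<in> \<Gamma>" "Dfun A0 \<noteq> 0" by auto
  show "\<Gamma> \<subseteq> closure ?G"
  proof
    fix A assume A: "A \<in> \<Gamma>"
    obtain C k where C: "matpoly C k 0 = A" "matpoly C k 1 = A0" "\<forall>t\<in>{0..1}. matpoly C k t \<in> \<Gamma>"
      using bspec[OF bspec[OF polyconn A] A0(1)] by (elim exE conjE) simp
    obtain q where q: "\<forall>t. Dfun (matpoly C k t) = poly q (complex_of_real t)"
      using PF_real_poly[OF PF_matpoly[of C k]] by (elim exE)
    have q0: "q \<noteq> 0" using q[rule_format, of 1] C(2) A0(2) by auto
    have finR: "finite {t::real. poly q (complex_of_real t) = 0}"
    proof -
      have "{t::real. poly q (complex_of_real t) = 0} = complex_of_real -` {z. poly q z = 0}" by auto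
      then show ?thesis using finite_vimageI[OF poly_roots_finite[OF q0], of complex_of_real]
        by (simp add: inj_def)
    qed
    have ic: "isCont (matpoly C k) 0"
      unfolding matpoly_def by (intro continuous_intros)
    show "A \<in> closure ?G"
      unfolding closure_approachable
    proof (intro allI impI)
      fix e :: real assume "e > 0"
      then obtain d where d: "d > 0" "\<forall>t. dist t 0 < d \<longrightarrow> dist (matpoly C k t) (matpoly C k 0) < e"
        using ic[unfolded continuous_at_eps_delta, rule_format, OF \<open>e > 0\<close>] by (elim exE conjE) simp
      have "infinite {0<..<min d 1}" using d by (intro infinite_Ioo) auto
      then have "infinite ({0<..<min d 1} - {t::real. poly q (complex_of_real t) = 0})"
        using finR by (rule Diff_infinite_finite[rotated])
      then have "({0<..<min d 1} - {t::real. poly q (complex_of_real t) = 0}) \<noteq> {}"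
        by (rule infinite_imp_nonempty)
      then obtain t where t0: "t \<in> {0<..<min d 1} - {t::real. poly q (complex_of_real t) = 0}"
        by (meson ex_in_conv)
      then have t: "t \<in> {0<..<min d 1}" "poly q (complex_of_real t) \<noteq> 0" by auto
      have "t \<in> {0..1}" using t(1) by auto
      then have "matpoly C k t \<in> \<Gamma>" using C(3) by (meson bspec)
      moreover have "Dfun (matpoly C k t) \<noteq> 0" using t(2) q by simp
      ultimately have "matpoly C k t \<in> ?G"
        using good_iff[of "matpoly C k t"] by simp
      moreover have "dist t 0 < d" using t(1) by auto
      then have "dist (matpoly C k t) A < e"
        using d(2) C(1) by metis
      ultimately show "\<exists>y\<in>?G. dist y A < e" by (intro bexI)
    qed
  qed
qed

end
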